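(* Let $[n]=A\cup B$ with $A\cap B=\emptyset$, let $t_1,t_2\ge0$ be integers, let $r\ge1$, and let $\mathcal C$ be an $[n,k]$ linear code over a finite field such that: (1) for every nonempty $E\subseteq A$ with $|E|\le t_1$ there is $i\in E$ having a recovering set $R\subseteq A\setminus E$; (2) for every nonempty $E\subseteq A$ with $|E|\le t_1+t_2+1$ there is $i\in E$ having a recovering set $R\subseteq[n]\setminus E$; (3) for every nonempty $E\subseteq B$ with $|E|\le t_2$ there is $i\in E$ having a recovering set $R\subseteq B\setminus E$; (4) for every nonempty $E\subseteq B$ with $|E|\le t_1+t_2+1$ there is $i\in E$ having a recovering set $R\subseteq[n]\setminus E$; where all recovering sets mentioned have size at most $r$. Then $\mathcal C$ is an $(n,k,r,t)$-SLRC with $t=t_1+t_2+1$.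
   Context: For $i\in[n]$, a recovering set of $i$ is a set $R\subseteq[n]\setminus\{i\}$ such that there exist nonzero field elements $a_j$ ($j\in R$) with $x_i=\sum_{j\in R}a_jx_j$ for all codewords $x\in\mathcal C$. $\mathcal C$ is an $(n,k,r,t)$-SLRC if for every $E\subseteq[n]$ with $|E|\le t$, $E$ can be indexed as $\{i_1,\dots,i_{|E|}\}$ such that each $i_\ell$ has a recovering set $R_\ell\subseteq([n]\setminus E)\cup\{i_1,\dots,i_{\ell-1}\}$ with $|R_\ell|\le r$. *)

theory Defs
  imports "HOL-Analysis.Analysis"
begin

text \<open>Coordinates are indexed by a finite type 'n, playing the role of [n]
  (so n = CARD('n)); codewords are vectors in 'a^'n over a finite field 'a.\<close>

definition linear_code :: "nat \<Rightarrow> ('a::{field,finite} ^ 'n) set \<Rightarrow> bool" where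
  "linear_code k C \<longleftrightarrow> vec.subspace C \<and> vec.dim C = k"

definition recovering_set :: "('a::field ^ 'n) set \<Rightarrow> 'n \<Rightarrow> 'n set \<Rightarrow> bool" where
  "recovering_set C i R \<longleftrightarrow> R \<subseteq> UNIV - {i} \<and>
     (\<exists>a :: 'n \<Rightarrow> 'a. (\<forall>j\<in>R. a j \<noteq> 0) \<and> (\<forall>x\<in>C. x $ i = (\<Sum>j\<in>R. a j * x $ j)))"

definition SLRC :: "nat \<Rightarrow> nat \<Rightarrow> nat \<Rightarrow> ('a::{field,finite} ^ 'n) set \<Rightarrow> bool" where
  "SLRC k r t C \<longleftrightarrow> linear_code k C \<and>
     (\<forall>E :: 'n set. card E \<le> t \<longrightarrow>
        (\<exists>l. distinct l \<and> set l = E \<and>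
           (\<forall>m < length l. \<exists>R. recovering_set C (l ! m) R \<and> card R \<le> r \<and>
                R \<subseteq> (UNIV - E) \<union> set (take m l))))"

end

theory Submission
  imports Defs
begin

lemma peel:
  fixes C :: "('a::{field,finite} ^ 'n) set"
  assumes "finite E"
    and "\<And>S. S \<subseteq> E \<Longrightarrow> S \<noteq> {} \<Longrightarrow>
           \<exists>i\<in>S. \<exists>R. recovering_set C i R \<and> card R \<le> r \<and> R \<subseteq> UNIV - S"
  shows "\<exists>l. distinct l \<and> set l = E \<and>
           (\<forall>m < length l. \<exists>R. recovering_set C (l ! m) R \<and> card R \<le> r \<and>
                R \<subseteq> (UNIV - E) \<union> set (take m l))"
  using assms
proof (induction "card E" arbitrary: E)
  case 0
  then show ?case by (intro exI[of _ "[]"]) auto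
next
  case (Suc x)
  then have ne: "E \<noteq> {}" by auto
  from Suc.prems(2)[OF order_refl ne] obtain i R0 where i: "i \<in> E"
    and R0: "recovering_set C i R0" "card R0 \<le> r" "R0 \<subseteq> UNIV - E" by blast
  have "\<exists>l. distinct l \<and> set l = E - {i} \<and>
           (\<forall>m < length l. \<exists>R. recovering_set C (l ! m) R \<and> card R \<le> r \<and>
                R \<subseteq> (UNIV - (E - {i})) \<union> set (take m l))"
    apply (rule Suc.hyps)
    using Suc.hyps(2) Suc.prems i apply auto[2]
    using Suc.prems(2) by blast
  then obtain l where l: "distinct l" "set l = E - {i}"
    "\<forall>m < length l. \<exists>R. recovering_set C (l ! m) R \<and> card R \<le> r \<and>
                R \<subseteq> (UNIV - (E - {i})) \<union> set (take m l)" by blast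
  show ?case
  proof (intro exI[of _ "i # l"] conjI allI impI)
    show "distinct (i # l)" using l by auto
    show "set (i # l) = E" using l i by auto
    fix m assume m: "m < length (i # l)"
    show "\<exists>R. recovering_set C ((i # l) ! m) R \<and> card R \<le> r \<and>
                R \<subseteq> (UNIV - E) \<union> set (take m (i # l))"
    proof (cases m)
      case 0
      then show ?thesis using R0 by auto
    next
      case (Suc m')
      then have "m' < length l" using m by auto
      with l(3) obtain R where "recovering_set C (l ! m') R" "card R \<le> r"
        "R \<subseteq> (UNIV - (E - {i})) \<union> set (take m' l)" by blast
      then show ?thesis using Suc by auto
    qed
  qed
qed

theorem lemma2:
  fixes C :: "('a::{field,finite} ^ 'n) set"
    and A B :: "'n set"
    and k r t1 t2 :: nat
  assumes AB: "A \<union> B = UNIV" "A \<inter> B = {}"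
    and r: "r \<ge> 1"
    and code: "linear_code k C"
    and c1: "\<And>E. E \<subseteq> A \<Longrightarrow> E \<noteq> {} \<Longrightarrow> card E \<le> t1 \<Longrightarrow>
               \<exists>i\<in>E. \<exists>R. recovering_set C i R \<and> card R \<le> r \<and> R \<subseteq> A - E"
    and c2: "\<And>E. E \<subseteq> A \<Longrightarrow> E \<noteq> {} \<Longrightarrow> card E \<le> t1 + t2 + 1 \<Longrightarrow>
               \<exists>i\<in>E. \<exists>R. recovering_set C i R \<and> card R \<le> r \<and> R \<subseteq> UNIV - E"
    and c3: "\<And>E. E \<subseteq> B \<Longrightarrow> E \<noteq> {} \<Longrightarrow> card E \<le> t2 \<Longrightarrow>
               \<exists>i\<in>E. \<exists>R. recovering_set C i R \<and> card R \<le> r \<and> R \<subseteq> B - E"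
    and c4: "\<And>E. E \<subseteq> B \<Longrightarrow> E \<noteq> {} \<Longrightarrow> card E \<le> t1 + t2 + 1 \<Longrightarrow>
               \<exists>i\<in>E. \<exists>R. recovering_set C i R \<and> card R \<le> r \<and> R \<subseteq> UNIV - E"
  shows "SLRC k r (t1 + t2 + 1) C"
  unfolding SLRC_def
proof (intro conjI allI impI)
  show "linear_code k C" by (rule code)
  fix E :: "'n set"
  assume E: "card E \<le> t1 + t2 + 1"
  have fin: "finite E" by simp
  have split: "card E = card (E \<inter> A) + card (E \<inter> B)"
  proof -
    have "E = (E \<inter> A) \<union> (E \<inter> B)" using AB by auto
    then have "card E = card ((E \<inter> A) \<union> (E \<inter> B))" by simp
    also have "\<dots> = card (E \<inter> A) + card (E \<inter> B)"
      by (rule card_Un_disjoint) (use AB in auto)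
    finally show ?thesis .
  qed
  show "\<exists>l. distinct l \<and> set l = E \<and>
           (\<forall>m < length l. \<exists>R. recovering_set C (l ! m) R \<and> card R \<le> r \<and>
                R \<subseteq> (UNIV - E) \<union> set (take m l))"
  proof (rule peel[OF fin])
    fix S assume S: "S \<subseteq> E" "S \<noteq> {}"
    have cS: "card S \<le> t1 + t2 + 1" using card_mono[OF fin S(1)] E by simp
    show "\<exists>i\<in>S. \<exists>R. recovering_set C i R \<and> card R \<le> r \<and> R \<subseteq> UNIV - S"
    proof (cases "card (E \<inter> A) \<le> t1")
      case True
      show ?thesis
      proof (cases "S \<inter> A = {}")
        case True
        then have "S \<subseteq> B" using AB by auto
        from c4[OF this S(2) cS] show ?thesis .
      next
        case False
        have "card (S \<inter> A) \<le> t1"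
          using card_mono[of "E \<inter> A" "S \<inter> A"] S \<open>card (E \<inter> A) \<le> t1\<close> by (meson Int_mono finite_Int fin order_trans order_refl)
        from c1[OF _ False this] obtain i R where "i \<in> S \<inter> A" "recovering_set C i R"
          "card R \<le> r" "R \<subseteq> A - S \<inter> A" by auto
        then show ?thesis by blast
      qed
    next
      case False
      then have Bt: "card (E \<inter> B) \<le> t2" using split E by linarith
      show ?thesis
      proof (cases "S \<inter> B = {}")
        case True
        then have "S \<subseteq> A" using AB by auto
        from c2[OF this S(2) cS] show ?thesis .
      next
        case False
        have "card (S \<inter> B) \<le> t2"
          using card_mono[of "E \<inter> B" "S \<inter> B"] S Bt by (meson Int_mono finite_Int fin order_trans order_refl)
        from c3[OF _ False this] obtain i R where "i \<in> S \<inter> B" "recovering_set C i R"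
          "card R \<le> r" "R \<subseteq> B - S \<inter> B" by auto
        then show ?thesis by blast
      qed
    qed
  qed
qed

end
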